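(* Let $G$ be a graph on $n\ge 1$ vertices and let $s\ge 1$ be an integer. (1) For $x>\lambda(G)$ put $\beta_G(x)=\frac{s}{x}\chi_G(x)$. Then $\beta_G$ is strictly decreasing on $(\lambda(G),\infty)$, and $\lambda(\overline{K}_s\vee G)$ is the unique $x>\lambda(G)$ satisfying $\beta_G(x)=1$. (2) We have \[ \lambda(\overline{K}_s\vee G)\le \frac{\lambda(G)+\sqrt{\lambda(G)^2+4ns}}{2}, \] with equality if $G$ is regular.
   Context: $\lambda(\cdot)$ is the spectral radius of the adjacency matrix $A(\cdot)$. For $x>\lambda(G)$, the coronal of $G$ is $\chi_G(x)=\mathbf{1}^{\mathrm T}(xI-A(G))^{-1}\mathbf{1}$, the sum of all entries of $(xI-A(G))^{-1}$. $\overline{K}_s$ is the edgeless graph on $s$ vertices and $\vee$ denotes the join (disjoint union plus all edges between the two graphs). *)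

theory Defs
  imports Complex_Main "Jordan_Normal_Form.Spectral_Radius"
begin

definition simple_graph :: "nat \<Rightarrow> (nat \<Rightarrow> nat \<Rightarrow> bool) \<Rightarrow> bool" where
  "simple_graph n E \<longleftrightarrow> (\<forall>i<n. \<forall>j<n. E i j \<longleftrightarrow> E j i) \<and> (\<forall>i<n. \<not> E i i)"

definition adj_matrix :: "nat \<Rightarrow> (nat \<Rightarrow> nat \<Rightarrow> bool) \<Rightarrow> real mat" where
  "adj_matrix n E = mat n n (\<lambda>(i, j). if E i j then 1 else 0)"

definition graph_spectral_radius :: "nat \<Rightarrow> (nat \<Rightarrow> nat \<Rightarrow> bool) \<Rightarrow> real" where
  "graph_spectral_radius n E = spectral_radius (map_mat complex_of_real (adj_matrix n E))"

definition mat_inv :: "nat \<Rightarrow> real mat \<Rightarrow> real mat" where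
  "mat_inv n M = (THE B. B \<in> carrier_mat n n \<and> M * B = 1\<^sub>m n \<and> B * M = 1\<^sub>m n)"

definition coronal :: "nat \<Rightarrow> (nat \<Rightarrow> nat \<Rightarrow> bool) \<Rightarrow> real \<Rightarrow> real" where
  "coronal n E x = (let B = mat_inv n (x \<cdot>\<^sub>m 1\<^sub>m n - adj_matrix n E)
                     in \<Sum>i<n. \<Sum>j<n. B $$ (i, j))"

text \<open>Join of the edgeless graph on s vertices (vertices 0..<s) with G on n vertices
  (G's vertex i becomes vertex s + i); the result has s + n vertices.\<close>
definition join_edgeless :: "nat \<Rightarrow> (nat \<Rightarrow> nat \<Rightarrow> bool) \<Rightarrow> nat \<Rightarrow> nat \<Rightarrow> bool" where
  "join_edgeless s E i j \<longleftrightarrow>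
     (i < s \<and> s \<le> j) \<or> (s \<le> i \<and> j < s) \<or> (s \<le> i \<and> s \<le> j \<and> E (i - s) (j - s))"

definition regular_graph :: "nat \<Rightarrow> (nat \<Rightarrow> nat \<Rightarrow> bool) \<Rightarrow> bool" where
  "regular_graph n E \<longleftrightarrow> (\<exists>k. \<forall>i<n. card {j. j < n \<and> E i j} = k)"

end

theory Submission
  imports Defs
begin



definition mv :: "nat \<Rightarrow> (nat \<Rightarrow> nat \<Rightarrow> real) \<Rightarrow> (nat \<Rightarrow> real) \<Rightarrow> nat \<Rightarrow> real" where
  "mv n a v = (\<lambda>i. \<Sum>j<n. a i j * v j)"
definition ip :: "nat \<Rightarrow> (nat \<Rightarrow> real) \<Rightarrow> (nat \<Rightarrow> real) \<Rightarrow> real" where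
  "ip n u v = (\<Sum>i<n. u i * v i)"
definition symm :: "nat \<Rightarrow> (nat \<Rightarrow> nat \<Rightarrow> real) \<Rightarrow> bool" where
  "symm n a \<longleftrightarrow> (\<forall>i<n. \<forall>j<n. a i j = a j i)"

lemma ip_comm: "ip n u v = ip n v u" by (simp add: ip_def mult.commute)
lemma ip_nonneg: "0 \<le> ip n u u" by (simp add: ip_def sum_nonneg)
lemma ip_zero: "ip n u u = 0 \<Longrightarrow> i < n \<Longrightarrow> u i = 0"
  unfolding ip_def using sum_nonneg_eq_0_iff[of "{..<n}" "\<lambda>i. u i * u i"] by auto

lemma ip_expand:
  "ip n (\<lambda>i. f i - c * g i) (\<lambda>i. f i - c * g i) = ip n f f - 2 * c * ip n f g + c^2 * ip n g g"
proof -
  have "ip n (\<lambda>i. f i - c * g i) (\<lambda>i. f i - c * g i)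
      = (\<Sum>i<n. f i * f i - 2 * c * (f i * g i) + c^2 * (g i * g i))"
    unfolding ip_def by (intro sum.cong) (auto simp: algebra_simps power2_eq_square)
  also have "\<dots> = ip n f f - 2 * c * ip n f g + c^2 * ip n g g"
    by (simp add: ip_def sum.distrib sum_subtractf sum_distrib_left)
  finally show ?thesis .
qed

lemma ip_sym_mv: assumes s: "symm n a" shows "ip n (mv n a u) w = ip n u (mv n a w)"
proof -
  have "ip n (mv n a u) w = (\<Sum>i<n. \<Sum>j<n. a i j * u j * w i)"
    by (simp add: ip_def mv_def sum_distrib_right)
  also have "\<dots> = (\<Sum>j<n. \<Sum>i<n. a i j * u j * w i)" by (rule sum.swap)
  also have "\<dots> = (\<Sum>j<n. \<Sum>i<n. u j * (a j i * w i))"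
    using s by (intro sum.cong refl) (auto simp: symm_def)
  also have "\<dots> = ip n u (mv n a w)" by (simp add: ip_def mv_def sum_distrib_left)
  finally show ?thesis .
qed

lemma cs: "(ip n u w)^2 \<le> ip n u u * ip n w w"
proof (cases "ip n u u = 0")
  case True
  then have "\<And>i. i<n \<Longrightarrow> u i = 0" using ip_zero by blast
  then have "ip n u w = 0" by (simp add: ip_def)
  then show ?thesis using True by simp
next
  case False
  then have pos: "ip n u u > 0" using ip_nonneg[of n u] by linarith
  define t where "t = ip n u w / ip n u u"
  have "0 \<le> ip n (\<lambda>i. w i - t * u i) (\<lambda>i. w i - t * u i)" by (rule ip_nonneg)
  also have "\<dots> = ip n w w - 2 * t * ip n w u + t^2 * ip n u u" by (rule ip_expand)
  also have "\<dots> = ip n w w - (ip n u w)^2 / ip n u u"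
    using pos by (simp add: t_def field_simps power2_eq_square ip_comm[of n w u])
  finally show ?thesis using pos by (simp add: field_simps)
qed



lemma ip_mv_le:
  assumes l: "0 \<le> lam" and on: "ip n (mv n a v) (mv n a v) \<le> lam^2 * ip n v v"
  shows "\<bar>ip n v (mv n a v)\<bar> \<le> lam * ip n v v"
proof -
  have "(ip n v (mv n a v))^2 \<le> ip n v v * ip n (mv n a v) (mv n a v)" by (rule cs)
  also have "\<dots> \<le> ip n v v * (lam^2 * ip n v v)" using on ip_nonneg[of n v]
    by (intro mult_left_mono) auto
  also have "\<dots> = (lam * ip n v v)^2" by (simp add: power2_eq_square)
  finally have h: "\<bar>ip n v (mv n a v)\<bar>^2 \<le> (lam * ip n v v)^2" by simp
  have "0 \<le> lam * ip n v v" using l ip_nonneg[of n v] by (rule mult_nonneg_nonneg)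
  from power2_le_imp_le[OF h this] show ?thesis .
qed



lemma ON:
  assumes s: "symm n a" and l: "0 \<le> lam"
    and growth: "\<And>x. lam < x \<Longrightarrow> \<exists>C. \<forall>k i. i < n \<longrightarrow> \<bar>(mv n a ^^ k) v i\<bar> \<le> C * x ^ k"
  shows "ip n (mv n a v) (mv n a v) \<le> lam^2 * ip n v v"
proof (rule ccontr)
  assume "\<not> ?thesis"
  hence gt: "ip n (mv n a v) (mv n a v) > lam^2 * ip n v v" by simp
  define N where "N k = ip n ((mv n a ^^ k) v) ((mv n a ^^ k) v)" for k
  have N1': "N 1 = ip n (mv n a v) (mv n a v)" by (simp add: N_def)
  have N0': "N 0 = ip n v v" by (simp add: N_def)
  have N0: "N 0 > 0"
  proof -
    have "N 0 \<ge> 0" by (simp add: N_def ip_nonneg)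
    moreover have "N 0 \<noteq> 0"
    proof
      assume z: "N 0 = 0"
      hence "\<And>i. i<n \<Longrightarrow> v i = 0" using ip_zero[of n v] by (simp add: N_def)
      hence "\<And>i. mv n a v i = 0" by (simp add: mv_def)
      hence "ip n (mv n a v) (mv n a v) = 0" by (simp add: ip_def)
      with gt z N0' show False by simp
    qed
    ultimately show ?thesis by simp
  qed
  define q where "q = N 1 / N 0"
  have N1: "N 1 = q * N 0" using N0 by (simp add: q_def)
  have qgt: "q > lam^2" using gt N0 N0' N1' by (simp add: q_def less_divide_eq)
  have q0: "q > 0" using qgt l by (smt (verit) zero_le_power2)
  have CS: "(N (Suc k))^2 \<le> N k * N (Suc (Suc k))" for k
  proof -
    let ?w = "(mv n a ^^ k) v"
    have "N (Suc k) = ip n ?w (mv n a (mv n a ?w))"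
      using ip_sym_mv[OF s, of ?w "mv n a ?w"] by (simp add: N_def)
    moreover have "N (Suc (Suc k)) = ip n (mv n a (mv n a ?w)) (mv n a (mv n a ?w))"
      by (simp add: N_def)
    moreover have "N k = ip n ?w ?w" by (simp add: N_def)
    ultimately show ?thesis using cs by simp
  qed
  have step: "N k > 0 \<and> N (Suc k) \<ge> q * N k" for k
  proof (induction k)
    case 0 show ?case using N0 N1 by simp
  next
    case (Suc k)
    hence pk: "N k > 0" and r: "N (Suc k) \<ge> q * N k" by auto
    have p1: "N (Suc k) > 0" using pk r q0 by (smt (verit) mult_pos_pos)
    have "N k * (q * N (Suc k)) = (q * N k) * N (Suc k)" by simp
    also have "\<dots> \<le> N (Suc k) * N (Suc k)" using r p1 by (intro mult_right_mono) auto
    also have "\<dots> \<le> N k * N (Suc (Suc k))" using CS[of k] by (simp add: power2_eq_square)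
    finally have "q * N (Suc k) \<le> N (Suc (Suc k))" using pk by simp
    thus ?case using p1 by simp
  qed
  have lower: "N k \<ge> q^k * N 0" for k
  proof (induction k)
    case 0 show ?case by simp
  next
    case (Suc k)
    have "q^(Suc k) * N 0 = q * (q^k * N 0)" by simp
    also have "\<dots> \<le> q * N k" using Suc q0 by (intro mult_left_mono) auto
    also have "\<dots> \<le> N (Suc k)" using step[of k] by simp
    finally show ?case .
  qed
  define x where "x = sqrt ((lam^2 + q) / 2)"
  have x2: "x^2 = (lam^2 + q) / 2" unfolding x_def using q0 by (simp add: add_nonneg_pos)
  have "lam^2 < (lam^2 + q) / 2" using qgt by simp
  hence "sqrt (lam^2) < x" unfolding x_def by (rule real_sqrt_less_mono)
  hence "lam < x" using l by simp
  then obtain C where C: "\<And>k i. i < n \<Longrightarrow> \<bar>(mv n a ^^ k) v i\<bar> \<le> C * x ^ k"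
    using growth by blast
  have x0: "x > 0" using \<open>lam < x\<close> l by simp
  have upper: "N k \<le> real n * C^2 * (x^2)^k" for k
  proof -
    have "N k = (\<Sum>i<n. ((mv n a ^^ k) v i)^2)" by (simp add: N_def ip_def power2_eq_square)
    also have "\<dots> \<le> (\<Sum>i<n. (C * x^k)^2)"
    proof (intro sum_mono)
      fix i assume "i \<in> {..<n}"
      hence "\<bar>(mv n a ^^ k) v i\<bar> \<le> \<bar>C * x ^ k\<bar>" using C[of i k] by auto
      thus "((mv n a ^^ k) v i)^2 \<le> (C * x^k)^2" using abs_le_square_iff by blast
    qed
    also have "\<dots> = real n * C^2 * (x^2)^k" by (simp add: power_mult_distrib power_mult[symmetric] mult.commute)
    finally show ?thesis .
  qed
  define r where "r = q / x^2"
  have r1: "r > 1" unfolding r_def using x2 qgt x0 by simp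
  obtain k where k: "real n * C^2 / N 0 < r^k" using real_arch_pow[OF r1] by blast
  have "q^k = r^k * (x^2)^k" unfolding r_def using x0 by (simp add: power_divide)
  hence "r^k * (x^2)^k * N 0 \<le> real n * C^2 * (x^2)^k" using lower[of k] upper[of k] by simp
  hence "r^k * N 0 \<le> real n * C^2" using x0 by (simp add: mult.commute mult.left_commute)
  hence "r^k \<le> real n * C^2 / N 0" using N0 by (simp add: le_divide_eq)
  with k show False by simp
qed




lemma ip_scale_diff: "ip n v (\<lambda>i. x * u i - w i) = x * ip n v u - ip n v w"
  by (simp add: ip_def algebra_simps sum_subtractf sum_distrib_left)

lemma ip_diff_left: "ip n (\<lambda>i. u i - w i) v = ip n u v - ip n w v"
  by (simp add: ip_def algebra_simps sum_subtractf)

lemma mv_diff: "mv n a (\<lambda>i. u i - w i) i = mv n a u i - mv n a w i"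
  by (simp add: mv_def algebra_simps sum_subtractf)

lemma ip_cong: "(\<And>i. i < n \<Longrightarrow> u i = u' i) \<Longrightarrow> (\<And>i. i < n \<Longrightarrow> v i = v' i) \<Longrightarrow> ip n u v = ip n u' v'"
  by (simp add: ip_def)

lemma pf_lite:
  assumes s: "symm n a" and nn: "\<And>i j. i<n \<Longrightarrow> j<n \<Longrightarrow> a i j \<ge> 0" and l: "0 \<le> lam"
   and on: "\<And>v. ip n (mv n a v) (mv n a v) \<le> lam^2 * ip n v v"
   and ev: "\<And>i. i<n \<Longrightarrow> mv n a e i = mu * e i" and mu: "\<bar>mu\<bar> = lam"
   and i: "i < n"
  shows "mv n a (\<lambda>i. \<bar>e i\<bar>) i = lam * \<bar>e i\<bar>"
proof -
  define p where "p = (\<lambda>i. \<bar>e i\<bar>)"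
  have pp: "ip n p p = ip n e e" by (simp add: p_def ip_def)
  have "ip n e (mv n a e) = (\<Sum>i<n. e i * (mu * e i))"
    unfolding ip_def by (rule sum.cong) (auto simp: ev)
  also have "\<dots> = mu * ip n e e" by (simp add: ip_def sum_distrib_left mult_ac)
  finally have "lam * ip n p p = \<bar>ip n e (mv n a e)\<bar>" using mu pp ip_nonneg[of n e] by (simp add: abs_mult)
  also have "\<bar>ip n e (mv n a e)\<bar> \<le> ip n p (mv n a p)"
  proof -
    have "\<bar>ip n e (mv n a e)\<bar> = \<bar>\<Sum>i<n. \<Sum>j<n. e i * a i j * e j\<bar>"
      by (simp add: ip_def mv_def sum_distrib_left mult_ac)
    also have "\<dots> \<le> (\<Sum>i<n. \<Sum>j<n. \<bar>e i * a i j * e j\<bar>)"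
      by (rule order_trans[OF sum_abs]) (intro sum_mono sum_abs)
    also have "\<dots> = (\<Sum>i<n. \<Sum>j<n. p i * a i j * p j)"
      using nn by (intro sum.cong refl) (auto simp: p_def abs_mult)
    also have "\<dots> = ip n p (mv n a p)" by (simp add: ip_def mv_def sum_distrib_left mult_ac)
    finally show ?thesis .
  qed
  finally have lo: "lam * ip n p p \<le> ip n p (mv n a p)" .
  have lo2: "lam * (lam * ip n p p) \<le> lam * ip n p (mv n a p)" using lo l by (rule mult_left_mono)
  have "ip n (\<lambda>i. mv n a p i - lam * p i) (\<lambda>i. mv n a p i - lam * p i)
        = ip n (mv n a p) (mv n a p) - 2 * lam * ip n (mv n a p) p + lam^2 * ip n p p"
    by (rule ip_expand)
  also have "\<dots> \<le> 0" using on[of p] lo2 ip_comm[of n "mv n a p" p]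
    by (simp add: power2_eq_square)
  finally have "ip n (\<lambda>i. mv n a p i - lam * p i) (\<lambda>i. mv n a p i - lam * p i) = 0"
    using ip_nonneg by (simp add: order_antisym)
  from ip_zero[OF this i] show ?thesis by (simp add: p_def)
qed

lemma real_ev:
  assumes s: "symm n a"
    and ev: "\<And>i. i<n \<Longrightarrow> (\<Sum>j<n. complex_of_real (a i j) * z j) = mu * z i"
    and nz: "i0 < n" "z i0 \<noteq> 0"
  shows "\<exists>e i1. i1 < n \<and> e i1 \<noteq> 0 \<and> (\<forall>i<n. mv n a e i = Re mu * e i) \<and> Im mu = 0"
proof -
  define p where "p = (\<lambda>i. Re (z i))"
  define q where "q = (\<lambda>i. Im (z i))"
  have ep: "mv n a p i = Re mu * p i - Im mu * q i" if "i<n" for i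
  proof -
    have "Re (\<Sum>j<n. complex_of_real (a i j) * z j) = Re (mu * z i)" using ev[OF that] by simp
    thus ?thesis by (simp add: mv_def p_def q_def Re_sum)
  qed
  have eq: "mv n a q i = Im mu * p i + Re mu * q i" if "i<n" for i
  proof -
    have "Im (\<Sum>j<n. complex_of_real (a i j) * z j) = Im (mu * z i)" using ev[OF that] by simp
    thus ?thesis by (simp add: mv_def p_def q_def Im_sum)
  qed
  have 1: "ip n q (mv n a p) = Re mu * ip n q p - Im mu * ip n q q"
  proof -
    have "ip n q (mv n a p) = ip n q (\<lambda>i. Re mu * p i - Im mu * q i)"
      by (rule ip_cong) (auto simp: ep)
    also have "\<dots> = Re mu * ip n q p - Im mu * ip n q q"
      by (simp add: ip_def algebra_simps sum_subtractf sum_distrib_left)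
    finally show ?thesis .
  qed
  have 2: "ip n p (mv n a q) = Im mu * ip n p p + Re mu * ip n p q"
  proof -
    have "ip n p (mv n a q) = ip n p (\<lambda>i. Im mu * p i + Re mu * q i)"
      by (rule ip_cong) (auto simp: eq)
    also have "\<dots> = Im mu * ip n p p + Re mu * ip n p q"
      by (simp add: ip_def algebra_simps sum.distrib sum_distrib_left)
    finally show ?thesis .
  qed
  have 3: "ip n q (mv n a p) = ip n p (mv n a q)"
    using ip_sym_mv[OF s, of p q] ip_comm[of n q "mv n a p"] by simp
  have "Im mu * (ip n p p + ip n q q) = 0" using 1 2 3 ip_comm[of n p q] by (simp add: algebra_simps)
  moreover have "ip n p p + ip n q q \<noteq> 0"
  proof
    assume "ip n p p + ip n q q = 0"
    hence "ip n p p = 0" "ip n q q = 0" using ip_nonneg[of n p] ip_nonneg[of n q] by linarith+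
    hence "p i0 = 0" "q i0 = 0" using ip_zero nz(1) by blast+
    hence "z i0 = 0" by (simp add: p_def q_def complex_eq_iff)
    with nz(2) show False by simp
  qed
  ultimately have im: "Im mu = 0" by simp
  show ?thesis
  proof (cases "p i0 = 0")
    case False
    then show ?thesis using ep im nz(1) by (intro exI[of _ p] exI[of _ i0]) auto
  next
    case True
    then have "q i0 \<noteq> 0" using nz(2) by (simp add: p_def q_def complex_eq_iff)
    then show ?thesis using eq im nz(1) by (intro exI[of _ q] exI[of _ i0]) auto
  qed
qed

lemma coerc:
  assumes l: "0 \<le> lam" and on: "\<And>v. ip n (mv n a v) (mv n a v) \<le> lam^2 * ip n v v"
  shows "ip n v (\<lambda>i. x * v i - mv n a v i) \<ge> (x - lam) * ip n v v"
proof -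
  have "\<bar>ip n v (mv n a v)\<bar> \<le> lam * ip n v v" by (rule ip_mv_le[OF l on])
  then show ?thesis by (simp add: ip_scale_diff algebra_simps)
qed

lemma inj:
  assumes l: "0 \<le> lam" and on: "\<And>v. ip n (mv n a v) (mv n a v) \<le> lam^2 * ip n v v"
    and x: "lam < x" and eq: "\<And>i. i < n \<Longrightarrow> x * v i - mv n a v i = 0" and i: "i < n"
  shows "v i = 0"
proof -
  have "ip n v (\<lambda>i. x * v i - mv n a v i) = 0" by (simp add: ip_def eq)
  with coerc[OF l on, where v=v and x=x] have "(x - lam) * ip n v v \<le> 0" by simp
  hence "ip n v v \<le> 0" using x by (simp add: mult_le_0_iff)
  hence "ip n v v = 0" using ip_nonneg[of n v] by simp
  from ip_zero[OF this i] show ?thesis .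
qed

lemma uniq:
  assumes l: "0 \<le> lam" and on: "\<And>v. ip n (mv n a v) (mv n a v) \<le> lam^2 * ip n v v"
    and x: "lam < x" and w: "\<And>i. i < n \<Longrightarrow> x * w i - mv n a w i = 1"
    and w': "\<And>i. i < n \<Longrightarrow> x * w' i - mv n a w' i = 1" and i: "i < n"
  shows "w i = w' i"
proof -
  have "(\<lambda>i. w i - w' i) i = 0"
  proof (rule inj[OF l on x _ i])
    fix j assume j: "j < n"
    show "x * (w j - w' j) - mv n a (\<lambda>i. w i - w' i) j = 0"
      using w[OF j] w'[OF j] by (simp add: mv_diff algebra_simps)
  qed
  thus ?thesis by simp
qed

lemma aux_div: fixes S d N :: real assumes S: "0 < S" and d: "0 < d" and h: "S^2 \<le> N * (S / d)"
  shows "S \<le> N / d"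
proof -
  have "S^2 * d \<le> N * S" using h d by (simp add: field_simps)
  hence "S * (S * d) \<le> S * N" by (simp add: power2_eq_square mult_ac)
  hence "S * d \<le> N" using S by (rule mult_left_le_imp_le)
  thus ?thesis using d by (simp add: le_divide_eq)
qed

lemma chi_props:
  assumes l: "0 \<le> lam" and on: "\<And>v. ip n (mv n a v) (mv n a v) \<le> lam^2 * ip n v v"
    and x: "lam < x" and w: "\<And>i. i < n \<Longrightarrow> x * w i - mv n a w i = 1" and n: "0 < n"
  shows "(\<Sum>i<n. w i) > 0" "(\<Sum>i<n. w i) \<le> real n / (x - lam)"
proof -
  have S: "(\<Sum>i<n. w i) = ip n w (\<lambda>i. x * w i - mv n a w i)"
    unfolding ip_def by (rule sum.cong) (auto simp: w)
  have ww: "ip n w w > 0"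
  proof -
    have "ip n w w \<noteq> 0"
    proof
      assume "ip n w w = 0"
      hence h: "\<And>i. i < n \<Longrightarrow> w i = 0" using ip_zero by blast
      hence "mv n a w 0 = 0" by (simp add: mv_def)
      with w[OF n] h[OF n] show False by simp
    qed
    thus ?thesis using ip_nonneg[of n w] by simp
  qed
  have ge: "(\<Sum>i<n. w i) \<ge> (x - lam) * ip n w w" using coerc[OF l on, where v=w and x=x] S by simp
  moreover have "(x - lam) * ip n w w > 0" using ww x by simp
  ultimately show pos: "(\<Sum>i<n. w i) > 0" by simp
  have "(\<Sum>i<n. w i)^2 = (ip n (\<lambda>_. 1) w)^2" by (simp add: ip_def)
  also have "\<dots> \<le> ip n (\<lambda>_. 1) (\<lambda>_. 1) * ip n w w" by (rule cs)
  also have "\<dots> = real n * ip n w w" by (simp add: ip_def)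
  also have "\<dots> \<le> real n * ((\<Sum>i<n. w i) / (x - lam))" using ge x
    by (intro mult_left_mono) (auto simp: field_simps)
  finally have h: "(\<Sum>i<n. w i)^2 \<le> real n * ((\<Sum>i<n. w i) / (x - lam))" .
  show "(\<Sum>i<n. w i) \<le> real n / (x - lam)" using aux_div[OF pos _ h] x by simp
qed

lemma chi_mono:
  assumes s: "symm n a" and l: "0 \<le> lam" and on: "\<And>v. ip n (mv n a v) (mv n a v) \<le> lam^2 * ip n v v"
    and x: "lam < x" and xy: "x < y" and n: "0 < n"
    and u: "\<And>i. i < n \<Longrightarrow> x * u i - mv n a u i = 1"
    and z: "\<And>i. i < n \<Longrightarrow> y * z i - mv n a z i = 1"
  shows "(\<Sum>i<n. z i) < (\<Sum>i<n. u i)"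
proof -
  have Su: "(\<Sum>i<n. u i) = ip n u (\<lambda>i. y * z i - mv n a z i)"
    unfolding ip_def by (rule sum.cong) (auto simp: z)
  have Sz: "(\<Sum>i<n. z i) = ip n z (\<lambda>i. x * u i - mv n a u i)"
    unfolding ip_def by (rule sum.cong) (auto simp: u)
  have sy: "ip n z (mv n a u) = ip n u (mv n a z)"
    using ip_sym_mv[OF s, of z u] ip_comm[of n "mv n a z" u] by simp
  have diff: "(\<Sum>i<n. u i) - (\<Sum>i<n. z i) = (y - x) * ip n u z"
    using Su Sz sy ip_comm[of n z u] by (simp add: ip_scale_diff algebra_simps)
  define d where "d = (\<lambda>i. u i - z i)"
  have dd: "x * d i - mv n a d i = (y - x) * z i" if "i < n" for i
    using u[OF that] z[OF that] by (simp add: d_def mv_diff algebra_simps)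
  have "(y - x) * ip n d z = ip n d (\<lambda>i. x * d i - mv n a d i)"
    by (simp add: ip_def dd sum_distrib_left mult_ac)
  also have "\<dots> \<ge> (x - lam) * ip n d d" by (rule coerc[OF l on])
  finally have "(y - x) * ip n d z \<ge> 0" using x ip_nonneg[of n d] by (smt (verit) mult_nonneg_nonneg)
  hence dz: "ip n d z \<ge> 0" using xy by (simp add: zero_le_mult_iff)
  have zz: "ip n z z > 0"
  proof -
    have "ip n z z \<noteq> 0"
    proof
      assume "ip n z z = 0"
      hence h: "\<And>i. i < n \<Longrightarrow> z i = 0" using ip_zero by blast
      hence "mv n a z 0 = 0" by (simp add: mv_def)
      with z[OF n] h[OF n] show False by simp
    qed
    thus ?thesis using ip_nonneg[of n z] by simp
  qed
  have "ip n u z = ip n z z + ip n d z" by (simp add: d_def ip_diff_left)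
  hence "ip n u z > 0" using zz dz by simp
  with diff xy show ?thesis by (smt (verit) mult_pos_pos)
qed



lemma pow_smult_mat: fixes A :: "complex mat" assumes A: "A \<in> carrier_mat n n"
  shows "(c \<cdot>\<^sub>m A) ^\<^sub>m k = c ^ k \<cdot>\<^sub>m (A ^\<^sub>m k)"
proof (induction k)
  case 0 show ?case using A by (intro eq_matI) auto
next
  case (Suc k)
  have "(c \<cdot>\<^sub>m A) ^\<^sub>m Suc k = (c ^ k \<cdot>\<^sub>m (A ^\<^sub>m k)) * (c \<cdot>\<^sub>m A)" using Suc by simp
  also have "\<dots> = c ^ k \<cdot>\<^sub>m (A ^\<^sub>m k * (c \<cdot>\<^sub>m A))"
    using A by (intro mult_smult_assoc_mat[of _ n n]) auto
  also have "\<dots> = c ^ k \<cdot>\<^sub>m (c \<cdot>\<^sub>m (A ^\<^sub>m k * A))"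
    using A by (subst mult_smult_distrib) auto
  also have "\<dots> = c ^ Suc k \<cdot>\<^sub>m (A ^\<^sub>m Suc k)" by (intro eq_matI) auto
  finally show ?case .
qed

lemma jnf_eig:
  fixes Ac :: "complex mat"
  assumes n: "0 < n" and A: "Ac \<in> carrier_mat n n"
    and ent: "\<And>i j. i<n \<Longrightarrow> j<n \<Longrightarrow> Ac $$ (i,j) = complex_of_real (a i j)"
  shows "\<exists>mu z i0. i0 < n \<and> z i0 \<noteq> 0 \<and> cmod mu = spectral_radius Ac \<and>
           (\<forall>i<n. (\<Sum>j<n. complex_of_real (a i j) * z j) = mu * z i)"
proof -
  from spectral_radius_mem_max(1)[OF A n] obtain mu where mu: "mu \<in> spectrum Ac"
    and r: "spectral_radius Ac = cmod mu" by auto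
  from mu obtain v where v: "eigenvector Ac v mu" unfolding spectrum_def eigenvalue_def by auto
  have dr: "dim_row Ac = n" using A by auto
  from v have vc: "v \<in> carrier_vec n" and vnz: "v \<noteq> 0\<^sub>v n" and eq: "Ac *\<^sub>v v = mu \<cdot>\<^sub>v v"
    unfolding eigenvector_def dr by auto
  have "\<exists>i<n. v $ i \<noteq> 0"
  proof (rule ccontr)
    assume "\<not> ?thesis"
    hence "v = 0\<^sub>v n" using vc by (intro eq_vecI) auto
    with vnz show False by simp
  qed
  then obtain i0 where i0: "i0 < n" "v $ i0 \<noteq> 0" by auto
  have ev: "(\<Sum>j<n. complex_of_real (a i j) * v $ j) = mu * v $ i" if i: "i<n" for i
  proof -
    have "(Ac *\<^sub>v v) $ i = (mu \<cdot>\<^sub>v v) $ i" using eq by simp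
    moreover have "(Ac *\<^sub>v v) $ i = (\<Sum>j<n. complex_of_real (a i j) * v $ j)"
      using i A vc by (auto simp: scalar_prod_def ent atLeast0LessThan intro!: sum.cong)
    moreover have "(mu \<cdot>\<^sub>v v) $ i = mu * v $ i" using i vc by simp
    ultimately show ?thesis by simp
  qed
  show ?thesis using i0 r ev by (intro exI[of _ mu] exI[of _ "\<lambda>j. v $ j"] exI[of _ i0]) auto
qed

lemma jnf_pow_mv:
  fixes Ac :: "complex mat"
  assumes A: "Ac \<in> carrier_mat n n"
    and ent: "\<And>i j. i<n \<Longrightarrow> j<n \<Longrightarrow> Ac $$ (i,j) = complex_of_real (a i j)"
  shows "i < n \<Longrightarrow> complex_of_real ((mv n a ^^ k) u i) = (\<Sum>j<n. (Ac ^\<^sub>m k) $$ (i,j) * complex_of_real (u j))"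
proof (induction k arbitrary: u i)
  case 0
  have "(\<Sum>j<n. (Ac ^\<^sub>m 0) $$ (i,j) * complex_of_real (u j)) = (\<Sum>j<n. (if i = j then complex_of_real (u j) else 0))"
    using 0 A by (intro sum.cong) auto
  also have "\<dots> = complex_of_real (u i)" using 0 by simp
  finally show ?case by simp
next
  case (Suc k)
  have "complex_of_real ((mv n a ^^ Suc k) u i) = complex_of_real ((mv n a ^^ k) (mv n a u) i)"
    by (simp only: funpow_Suc_right o_apply)
  also have "\<dots> = (\<Sum>j<n. (Ac ^\<^sub>m k) $$ (i,j) * complex_of_real (mv n a u j))" using Suc by blast
  also have "\<dots> = (\<Sum>j<n. \<Sum>l<n. (Ac ^\<^sub>m k) $$ (i,j) * Ac $$ (j,l) * complex_of_real (u l))"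
    by (auto simp: mv_def sum_distrib_left ent mult.assoc intro!: sum.cong)
  also have "\<dots> = (\<Sum>l<n. \<Sum>j<n. (Ac ^\<^sub>m k) $$ (i,j) * Ac $$ (j,l) * complex_of_real (u l))"
    by (rule sum.swap)
  also have "\<dots> = (\<Sum>l<n. (Ac ^\<^sub>m Suc k) $$ (i,l) * complex_of_real (u l))"
  proof (intro sum.cong refl)
    fix l assume l: "l \<in> {..<n}"
    have "(Ac ^\<^sub>m Suc k) $$ (i,l) = (\<Sum>j<n. (Ac ^\<^sub>m k) $$ (i,j) * Ac $$ (j,l))"
      using Suc.prems l A by (auto simp: scalar_prod_def atLeast0LessThan intro!: sum.cong)
    then show "(\<Sum>j<n. (Ac ^\<^sub>m k) $$ (i,j) * Ac $$ (j,l) * complex_of_real (u l)) = (Ac ^\<^sub>m Suc k) $$ (i,l) * complex_of_real (u l)"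
      by (simp add: sum_distrib_right)
  qed
  finally show ?case .
qed

lemma jnf_growth:
  fixes Ac :: "complex mat"
  assumes n: "0 < n" and A: "Ac \<in> carrier_mat n n"
    and ent: "\<And>i j. i<n \<Longrightarrow> j<n \<Longrightarrow> Ac $$ (i,j) = complex_of_real (a i j)"
    and x: "spectral_radius Ac < x"
  shows "\<exists>C. \<forall>k i. i < n \<longrightarrow> \<bar>(mv n a ^^ k) v i\<bar> \<le> C * x ^ k"
proof -
  have "0 \<le> spectral_radius Ac" using spectral_radius_mem_max(1)[OF A n] by auto
  hence x0: "x > 0" using x by simp
  define B where "B = complex_of_real (1/x) \<cdot>\<^sub>m Ac"
  have B: "B \<in> carrier_mat n n" using A by (simp add: B_def)
  have "spectral_radius B < 1"
  proof -
    from spectral_radius_mem_max(1)[OF B n] obtain nu where nu: "nu \<in> spectrum B"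
      and r: "spectral_radius B = cmod nu" by auto
    from nu obtain w where w: "eigenvector B w nu" unfolding spectrum_def eigenvalue_def by auto
    have wc: "w \<in> carrier_vec n" and wnz: "w \<noteq> 0\<^sub>v n" and eq: "B *\<^sub>v w = nu \<cdot>\<^sub>v w"
      using w B unfolding eigenvector_def by auto
    have "Ac *\<^sub>v w = (complex_of_real x * nu) \<cdot>\<^sub>v w"
    proof (rule eq_vecI)
      fix i assume "i < dim_vec ((complex_of_real x * nu) \<cdot>\<^sub>v w)"
      hence i: "i < n" using wc by simp
      have "(B *\<^sub>v w) $ i = nu * w $ i" using eq i wc by (metis index_smult_vec(1) carrier_vecD)
      moreover have "(B *\<^sub>v w) $ i = complex_of_real (1/x) * (Ac *\<^sub>v w) $ i"
        using i A wc by (auto simp: B_def scalar_prod_def sum_distrib_left mult.assoc intro!: sum.cong)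
      ultimately have h: "complex_of_real (1/x) * (Ac *\<^sub>v w) $ i = nu * w $ i" by simp
      have xc: "complex_of_real x * complex_of_real (1/x) = 1" using x0 by (simp flip: of_real_mult)
      have "(Ac *\<^sub>v w) $ i = (complex_of_real x * complex_of_real (1/x)) * (Ac *\<^sub>v w) $ i"
        using xc by simp
      also have "\<dots> = complex_of_real x * (nu * w $ i)" using h by (simp only: mult.assoc)
      finally have "(Ac *\<^sub>v w) $ i = complex_of_real x * nu * w $ i" by (simp add: mult.assoc)
      thus "(Ac *\<^sub>v w) $ i = ((complex_of_real x * nu) \<cdot>\<^sub>v w) $ i" using i wc by simp
    qed (use wc A in simp)
    hence "eigenvector Ac w (complex_of_real x * nu)" using wc wnz A unfolding eigenvector_def by simp
    hence "cmod (complex_of_real x * nu) \<in> cmod ` spectrum Ac" unfolding spectrum_def eigenvalue_def by auto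
    from spectral_radius_mem_max(2)[OF A n this] have "x * cmod nu \<le> spectral_radius Ac"
      using x0 by (simp add: norm_mult)
    hence "x * cmod nu < x * 1" using x by simp
    hence "cmod nu < 1" using x0 by (simp only: mult_less_cancel_left_pos)
    thus ?thesis using r by simp
  qed
  from spectral_radius_jnf_norm_bound_less_1_upper_triangular[OF B this] obtain c
    where c: "\<And>k. norm_bound (B ^\<^sub>m k) c" by auto
  have xx: "complex_of_real x ^ k * complex_of_real (1/x) ^ k = 1" for k
    using x0 by (simp add: power_mult_distrib[symmetric] of_real_mult[symmetric])
  have Ak: "(Ac ^\<^sub>m k) $$ (i,j) = complex_of_real x ^ k * (B ^\<^sub>m k) $$ (i,j)" if "i<n" "j<n" for k i j
  proof -
    have cx0: "complex_of_real x \<noteq> 0" using x0 by simp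
    have "(B ^\<^sub>m k) $$ (i,j) = (1 / complex_of_real x) ^ k * (Ac ^\<^sub>m k) $$ (i,j)"
      using that A by (simp add: B_def pow_smult_mat)
    thus ?thesis using cx0 by (simp add: power_one_over field_simps)
  qed
  have cb: "cmod ((B ^\<^sub>m k) $$ (i,j)) \<le> c" if "i<n" "j<n" for k i j
    using c[of k] that B unfolding norm_bound_def by auto
  show ?thesis
  proof (intro exI[of _ "c * (\<Sum>j<n. \<bar>v j\<bar>)"] allI impI)
    fix k i assume i: "i < n"
    have "\<bar>(mv n a ^^ k) v i\<bar> = cmod (complex_of_real ((mv n a ^^ k) v i))" by simp
    also have "\<dots> = cmod (\<Sum>j<n. (Ac ^\<^sub>m k) $$ (i,j) * complex_of_real (v j))"
      using jnf_pow_mv[OF A ent i, of k v] by simp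
    also have "\<dots> \<le> (\<Sum>j<n. cmod ((Ac ^\<^sub>m k) $$ (i,j) * complex_of_real (v j)))" by (rule norm_sum)
    also have "\<dots> \<le> (\<Sum>j<n. x^k * c * \<bar>v j\<bar>)"
    proof (intro sum_mono)
      fix j assume j: "j \<in> {..<n}"
      have "cmod ((Ac ^\<^sub>m k) $$ (i,j) * complex_of_real (v j)) = x^k * cmod ((B ^\<^sub>m k) $$ (i,j)) * \<bar>v j\<bar>"
        using Ak[OF i] j x0 by (simp add: norm_mult norm_power)
      also have "\<dots> \<le> x^k * c * \<bar>v j\<bar>" using cb[OF i] j x0
        by (intro mult_right_mono mult_left_mono) auto
      finally show "cmod ((Ac ^\<^sub>m k) $$ (i,j) * complex_of_real (v j)) \<le> x^k * c * \<bar>v j\<bar>" .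
    qed
    also have "\<dots> = c * (\<Sum>j<n. \<bar>v j\<bar>) * x^k" by (simp add: sum_distrib_left mult_ac)
    finally show "\<bar>(mv n a ^^ k) v i\<bar> \<le> c * (\<Sum>j<n. \<bar>v j\<bar>) * x ^ k" .
  qed
qed

lemma spec_facts:
  fixes Ac :: "complex mat"
  assumes n: "0 < n" and A: "Ac \<in> carrier_mat n n"
    and ent: "\<And>i j. i<n \<Longrightarrow> j<n \<Longrightarrow> Ac $$ (i,j) = complex_of_real (a i j)"
    and s: "symm n a" and nn: "\<And>i j. i<n \<Longrightarrow> j<n \<Longrightarrow> a i j \<ge> 0"
  shows "0 \<le> spectral_radius Ac"
    and "\<And>v. ip n (mv n a v) (mv n a v) \<le> (spectral_radius Ac)^2 * ip n v v"
    and "\<exists>p. (\<forall>i<n. p i \<ge> 0) \<and> (\<exists>i<n. p i > 0) \<and> (\<forall>i<n. mv n a p i = spectral_radius Ac * p i)"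
proof -
  show l: "0 \<le> spectral_radius Ac" using spectral_radius_mem_max(1)[OF A n] by auto
  show on: "ip n (mv n a v) (mv n a v) \<le> (spectral_radius Ac)^2 * ip n v v" for v
    by (rule ON[OF s l], rule jnf_growth[OF n A ent])
  obtain mu z i0 where i0: "i0 < n" "z i0 \<noteq> 0" and mu: "cmod mu = spectral_radius Ac"
    and ev: "\<forall>i<n. (\<Sum>j<n. complex_of_real (a i j) * z j) = mu * z i"
    using jnf_eig[OF n A ent] by blast
  have ev': "\<And>i. i<n \<Longrightarrow> (\<Sum>j<n. complex_of_real (a i j) * z j) = mu * z i" using ev by blast
  from real_ev[OF s ev' i0] obtain e i1 where e: "i1 < n" "e i1 \<noteq> 0"
    and eev: "\<forall>i<n. mv n a e i = Re mu * e i" and im: "Im mu = 0" by blast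
  have ab: "\<bar>Re mu\<bar> = spectral_radius Ac" using mu im by (simp add: cmod_eq_Re)
  have eev': "\<And>i. i<n \<Longrightarrow> mv n a e i = Re mu * e i" using eev by blast
  have pf: "mv n a (\<lambda>i. \<bar>e i\<bar>) i = spectral_radius Ac * \<bar>e i\<bar>" if "i<n" for i
    by (rule pf_lite[OF s nn l on eev' ab that])
  show "\<exists>p. (\<forall>i<n. p i \<ge> 0) \<and> (\<exists>i<n. p i > 0) \<and> (\<forall>i<n. mv n a p i = spectral_radius Ac * p i)"
    using pf e by (intro exI[of _ "\<lambda>i. \<bar>e i\<bar>"]) auto
qed



lemma delta_sum:
  assumes i: "i < n"
  shows "(\<Sum>k<n. ((if i = k then x else 0) - a i k) * f k) = x * f i - mv n a f i"
proof -
  have "(\<Sum>k<n. ((if i = k then x else 0) - a i k) * f k)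
      = (\<Sum>k<n. (if i = k then x * f k else 0)) - (\<Sum>k<n. a i k * f k)"
    by (simp add: left_diff_distrib sum_subtractf if_distrib[of "\<lambda>y. y * _"] cong: if_cong)
  also have "\<dots> = x * f i - mv n a f i" using i by (simp add: mv_def)
  finally show ?thesis .
qed

lemma coronal_sol:
  assumes l: "0 \<le> lam"
    and on: "\<And>v. ip n (mv n (\<lambda>i j. if E i j then 1 else 0) v) (mv n (\<lambda>i j. if E i j then 1 else 0) v) \<le> lam^2 * ip n v v"
    and x: "lam < x"
  shows "\<exists>w. (\<forall>i<n. x * w i - mv n (\<lambda>i j. if E i j then 1 else 0) w i = 1) \<and> coronal n E x = (\<Sum>i<n. w i)"
proof -
  define a :: "nat \<Rightarrow> nat \<Rightarrow> real" where "a = (\<lambda>i j. if E i j then 1 else 0)"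
  define Mx where "Mx = x \<cdot>\<^sub>m 1\<^sub>m n - adj_matrix n E"
  have Mc: "Mx \<in> carrier_mat n n" unfolding Mx_def adj_matrix_def
    by (rule minus_carrier_mat) auto
  have Ment: "Mx $$ (i,j) = (if i = j then x else 0) - a i j" if "i < n" "j < n" for i j
    using that by (simp add: Mx_def adj_matrix_def a_def)
  have det: "det Mx \<noteq> 0"
  proof
    assume "det Mx = 0"
    then obtain v where v: "v \<in> carrier_vec n" "v \<noteq> 0\<^sub>v n" "Mx *\<^sub>v v = 0\<^sub>v n"
      using det_0_iff_vec_prod_zero[OF Mc] by auto
    have z: "x * v $ i - mv n a (\<lambda>j. v $ j) i = 0" if i: "i<n" for i
    proof -
      have "(Mx *\<^sub>v v) $ i = 0" using v(3) i by simp
      moreover have "(Mx *\<^sub>v v) $ i = (\<Sum>j<n. ((if i = j then x else 0) - a i j) * v $ j)"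
        using i Mc v(1) by (auto simp: scalar_prod_def Ment atLeast0LessThan intro!: sum.cong)
      ultimately show ?thesis using delta_sum[OF i, of x a "\<lambda>j. v $ j"] by simp
    qed
    have "v $ i = 0" if "i < n" for i
      using inj[OF l on[folded a_def] x, where v="\<lambda>j. v $ j"] z that by blast
    hence "v = 0\<^sub>v n" using v(1) by (intro eq_vecI) auto
    with v(2) show False by simp
  qed
  have "Mx \<in> Units (ring_mat TYPE(real) n undefined)" by (rule det_non_zero_imp_unit[OF Mc det])
  then obtain B where B: "B \<in> carrier_mat n n" "B * Mx = 1\<^sub>m n" "Mx * B = 1\<^sub>m n"
    unfolding Units_def ring_mat_def by auto
  have inv: "mat_inv n Mx = B"
    unfolding mat_inv_def
  proof (rule the_equality)
    show "B \<in> carrier_mat n n \<and> Mx * B = 1\<^sub>m n \<and> B * Mx = 1\<^sub>m n" using B by auto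
    fix B' assume h: "B' \<in> carrier_mat n n \<and> Mx * B' = 1\<^sub>m n \<and> B' * Mx = 1\<^sub>m n"
    have "B' = B' * (Mx * B)" using h B right_mult_one_mat[of B' n n] by simp
    also have "\<dots> = (B' * Mx) * B" using assoc_mult_mat[of B' n n Mx n B n] h B(1) Mc by simp
    also have "\<dots> = B" using h B left_mult_one_mat[of B n n] by simp
    finally show "B' = B" .
  qed
  define w where "w i = (\<Sum>j<n. B $$ (i,j))" for i
  have cor: "coronal n E x = (\<Sum>i<n. w i)"
    unfolding coronal_def Let_def Mx_def[symmetric] inv w_def by simp
  have eqn: "x * w i - mv n a w i = 1" if i: "i < n" for i
  proof -
    have "1 = (\<Sum>j<n. (1\<^sub>m n :: real mat) $$ (i,j))" using i by simp
    also have "\<dots> = (\<Sum>j<n. (Mx * B) $$ (i,j))" using B(3) by simp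
    also have "\<dots> = (\<Sum>j<n. \<Sum>k<n. Mx $$ (i,k) * B $$ (k,j))"
      using i Mc B(1) by (auto simp: scalar_prod_def atLeast0LessThan intro!: sum.cong)
    also have "\<dots> = (\<Sum>k<n. \<Sum>j<n. Mx $$ (i,k) * B $$ (k,j))" by (rule sum.swap)
    also have "\<dots> = (\<Sum>k<n. ((if i = k then x else 0) - a i k) * w k)"
      using i by (auto simp: Ment w_def sum_distrib_left intro!: sum.cong)
    also have "\<dots> = x * w i - mv n a w i" by (rule delta_sum[OF i])
    finally show ?thesis by simp
  qed
  show ?thesis using eqn cor unfolding a_def by blast
qed

lemma sum_split_add: fixes s n :: nat shows "(\<Sum>i<s+n. f i) = (\<Sum>i<s. f i) + (\<Sum>i<n. f (s+i))"
  by (induction n) (auto simp: add.assoc)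



theorem lemma3p2:
  fixes n s :: nat and E :: "nat \<Rightarrow> nat \<Rightarrow> bool"
  assumes "n \<ge> 1" and "s \<ge> 1" and "simple_graph n E"
  defines "lam \<equiv> graph_spectral_radius n E"
      and "beta \<equiv> (\<lambda>x. real s / x * coronal n E x)"
      and "lamJ \<equiv> graph_spectral_radius (s + n) (join_edgeless s E)"
  shows "(\<forall>x y. lam < x \<longrightarrow> x < y \<longrightarrow> beta y < beta x)
         \<and> lamJ > lam \<and> beta lamJ = 1
         \<and> (\<forall>x. lam < x \<longrightarrow> beta x = 1 \<longrightarrow> x = lamJ)
         \<and> lamJ \<le> (lam + sqrt (lam ^ 2 + 4 * real n * real s)) / 2
         \<and> (regular_graph n E \<longrightarrow> lamJ = (lam + sqrt (lam ^ 2 + 4 * real n * real s)) / 2)"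
proof -
  define a :: "nat \<Rightarrow> nat \<Rightarrow> real" where "a = (\<lambda>i j. if E i j then 1 else 0)"
  define b :: "nat \<Rightarrow> nat \<Rightarrow> real" where "b = (\<lambda>i j. if join_edgeless s E i j then 1 else 0)"
  have n0: "0 < n" using assms(1) by simp
  have m0: "0 < s + n" using n0 by simp
  have s0: "0 < real s" using assms(2) by simp
  have Ac: "map_mat complex_of_real (adj_matrix n E) \<in> carrier_mat n n" by (simp add: adj_matrix_def)
  have Aent: "\<And>i j. i<n \<Longrightarrow> j<n \<Longrightarrow> map_mat complex_of_real (adj_matrix n E) $$ (i,j) = complex_of_real (a i j)"
    by (simp add: adj_matrix_def a_def)
  have Mc: "map_mat complex_of_real (adj_matrix (s+n) (join_edgeless s E)) \<in> carrier_mat (s+n) (s+n)"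
    by (simp add: adj_matrix_def)
  have Ment: "\<And>i j. i<s+n \<Longrightarrow> j<s+n \<Longrightarrow> map_mat complex_of_real (adj_matrix (s+n) (join_edgeless s E)) $$ (i,j) = complex_of_real (b i j)"
    by (simp add: adj_matrix_def b_def)
  have sa: "symm n a" using assms(3) by (auto simp: symm_def a_def simple_graph_def)
  have sb: "symm (s+n) b"
  proof -
    have "join_edgeless s E i j = join_edgeless s E j i" if "i < s+n" "j < s+n" for i j
    proof -
      have "i - s < n" "j - s < n" using that n0 by auto
      hence "E (i-s) (j-s) = E (j-s) (i-s)" using assms(3)[unfolded simple_graph_def] by blast
      thus ?thesis unfolding join_edgeless_def by auto
    qed
    thus ?thesis by (auto simp: symm_def b_def)
  qed
  have nna: "\<And>i j. i<n \<Longrightarrow> j<n \<Longrightarrow> a i j \<ge> 0" by (simp add: a_def)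
  have nnb: "\<And>i j. i<s+n \<Longrightarrow> j<s+n \<Longrightarrow> b i j \<ge> 0" by (simp add: b_def)
  have lamE: "lam = spectral_radius (map_mat complex_of_real (adj_matrix n E))"
    unfolding lam_def graph_spectral_radius_def ..
  have lamJE: "lamJ = spectral_radius (map_mat complex_of_real (adj_matrix (s+n) (join_edgeless s E)))"
    unfolding lamJ_def graph_spectral_radius_def ..
  note SA = spec_facts[OF n0 Ac Aent sa nna, folded lamE]
  note SM = spec_facts[OF m0 Mc Ment sb nnb, folded lamJE]
  have lam0: "0 \<le> lam" by (rule SA(1))
  have onA: "\<And>v. ip n (mv n a v) (mv n a v) \<le> lam^2 * ip n v v" by (rule SA(2))
  have lamJ0: "0 \<le> lamJ" by (rule SM(1))
  have onM: "\<And>v. ip (s+n) (mv (s+n) b v) (mv (s+n) b v) \<le> lamJ^2 * ip (s+n) v v" by (rule SM(2))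
  obtain p where p0: "\<forall>i<n. p i \<ge> 0" and ppos: "\<exists>i<n. p i > 0" and pev: "\<forall>i<n. mv n a p i = lam * p i"
    using SA(3) by blast
  obtain P where P0: "\<forall>i<s+n. P i \<ge> 0" and Ppos: "\<exists>i<s+n. P i > 0"
    and Pev: "\<forall>i<s+n. mv (s+n) b P i = lamJ * P i"
    using SM(3) by blast
  have sol: "\<exists>w. (\<forall>i<n. x * w i - mv n a w i = 1) \<and> coronal n E x = (\<Sum>i<n. w i)" if x: "lam < x" for x
    unfolding a_def by (rule coronal_sol[OF lam0 onA[unfolded a_def] x])

  have mono: "beta y < beta x" if x: "lam < x" and xy: "x < y" for x y
  proof -
    have y: "lam < y" using x xy by simp
    obtain u where u: "\<And>i. i<n \<Longrightarrow> x * u i - mv n a u i = 1" and cu: "coronal n E x = (\<Sum>i<n. u i)"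
      using sol[OF x] by blast
    obtain z where z: "\<And>i. i<n \<Longrightarrow> y * z i - mv n a z i = 1" and cz: "coronal n E y = (\<Sum>i<n. z i)"
      using sol[OF y] by blast
    have lt: "(\<Sum>i<n. z i) < (\<Sum>i<n. u i)" by (rule chi_mono[OF sa lam0 onA x xy n0 u z])
    have zp: "(\<Sum>i<n. z i) > 0" by (rule chi_props(1)[OF lam0 onA y z n0])
    have up: "(\<Sum>i<n. u i) > 0" by (rule chi_props(1)[OF lam0 onA x u n0])
    have x0: "0 < x" using x lam0 by simp
    have "(\<Sum>i<n. z i) / y < (\<Sum>i<n. u i) / y" using lt x0 xy by (intro divide_strict_right_mono) auto
    also have "\<dots> \<le> (\<Sum>i<n. u i) / x" using up x0 xy by (intro divide_left_mono) auto
    finally have "real s * ((\<Sum>i<n. z i) / y) < real s * ((\<Sum>i<n. u i) / x)"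
      using s0 by (intro mult_strict_left_mono) auto
    thus ?thesis unfolding beta_def cu cz by simp
  qed

  have gt: "lam < lamJ"
  proof (rule ccontr)
    assume "\<not> lam < lamJ"
    hence le: "lamJ \<le> lam" by simp
    define S where "S = (\<Sum>i<n. p i)"
    have S0: "S > 0"
    proof -
      from ppos obtain i where "i < n" "p i > 0" by blast
      thus ?thesis unfolding S_def using p0 by (intro sum_pos2[of "{..<n}" i]) auto
    qed
    define e where "e = S / (lam + 1)"
    have e0: "e > 0" using S0 lam0 by (simp add: e_def)
    have le1: "lam * e < S"
    proof -
      have "lam * e = S * (lam / (lam + 1))" by (simp add: e_def)
      also have "\<dots> < S * 1" using S0 lam0 by (intro mult_strict_left_mono) auto
      finally show ?thesis by simp
    qed
    define v where "v i = (if i < s then e else p (i - s))" for i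
    have mv1: "mv (s+n) b v i = S" if "i < s" for i
      using that by (simp add: mv_def sum_split_add b_def join_edgeless_def v_def S_def)
    have mv2: "mv (s+n) b v (s+i) = real s * e + lam * p i" if "i < n" for i
    proof -
      have "mv (s+n) b v (s+i) = (\<Sum>j<s. e) + (\<Sum>j<n. a i j * p j)"
        by (simp add: mv_def sum_split_add b_def join_edgeless_def v_def a_def)
      also have "\<dots> = real s * e + mv n a p i" by (simp add: mv_def)
      finally show ?thesis using pev that by simp
    qed
    have ipvM: "ip (s+n) v (mv (s+n) b v) = 2 * real s * e * S + lam * ip n p p"
    proof -
      have "ip (s+n) v (mv (s+n) b v) = (\<Sum>i<s. e * S) + (\<Sum>i<n. p i * (real s * e + lam * p i))"
        unfolding ip_def sum_split_add
        by (intro arg_cong2[where f="(+)"] sum.cong refl) (auto simp: v_def mv1 mv2)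
      also have "(\<Sum>i<n. p i * (real s * e + lam * p i)) = (\<Sum>i<n. real s * e * p i + lam * (p i * p i))"
        by (intro sum.cong) (auto simp: algebra_simps)
      also have "\<dots> = real s * e * S + lam * ip n p p"
        by (simp add: sum.distrib sum_distrib_left S_def ip_def)
      finally show ?thesis by simp
    qed
    have ipvv: "ip (s+n) v v = real s * e^2 + ip n p p"
      by (simp add: ip_def sum_split_add v_def power2_eq_square)
    have "\<bar>ip (s+n) v (mv (s+n) b v)\<bar> \<le> lamJ * ip (s+n) v v" by (rule ip_mv_le[OF lamJ0 onM])
    also have "\<dots> \<le> lam * ip (s+n) v v" using le ip_nonneg by (rule mult_right_mono)
    finally have h1: "2 * real s * e * S + lam * ip n p p \<le> lam * (real s * e^2 + ip n p p)"
      unfolding ipvM ipvv by simp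
    have "(real s * e) * (2 * S) \<le> (real s * e) * (lam * e)"
      using h1 by (simp add: algebra_simps power2_eq_square)
    moreover have "0 < real s * e" using s0 e0 by simp
    ultimately have "2 * S \<le> lam * e" by (rule mult_left_le_imp_le)
    with le1 S0 show False by simp
  qed

  have beta1: "beta lamJ = 1"
  proof -
    define T where "T = (\<Sum>j<n. P (s+j))"
    define c where "c = (\<Sum>i<s. P i)"
    define vv where "vv j = P (s+j)" for j
    have top: "mv (s+n) b P i = T" if "i < s" for i
      using that by (simp add: mv_def sum_split_add b_def join_edgeless_def T_def)
    have bot: "mv (s+n) b P (s+j) = c + mv n a vv j" if "j < n" for j
      by (simp add: mv_def sum_split_add b_def join_edgeless_def c_def a_def vv_def)
    have lJ0: "lamJ > 0" using gt lam0 by simp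
    have eq1: "lamJ * P i = T" if "i < s" for i using Pev top[OF that] that by auto
    have eq2: "lamJ * vv j - mv n a vv j = c" if "j < n" for j
      using Pev bot[OF that] that by (auto simp: vv_def)
    have c0: "c \<ge> 0" unfolding c_def using P0 by (intro sum_nonneg) auto
    have "c \<noteq> 0"
    proof
      assume c: "c = 0"
      have vz: "vv j = 0" if "j < n" for j
        by (rule inj[OF lam0 onA gt _ that]) (use eq2 c in auto)
      hence "T = 0" by (simp add: T_def vv_def[symmetric])
      hence "P i = 0" if "i < s" for i using eq1[OF that] lJ0 by simp
      moreover have "P (s+j) = 0" if "j < n" for j using vz[OF that] by (simp add: vv_def)
      ultimately have "P i = 0" if "i < s+n" for i
        using that by (metis add_diff_inverse_nat add_less_cancel_left)
      with Ppos show False by auto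
    qed
    hence c0': "c > 0" using c0 by simp
    define w where "w j = vv j / c" for j
    have weq: "lamJ * w j - mv n a w j = 1" if "j < n" for j
    proof -
      have "mv n a w j = mv n a vv j / c" by (simp add: mv_def w_def sum_divide_distrib)
      hence "lamJ * w j - mv n a w j = (lamJ * vv j - mv n a vv j) / c" by (simp add: w_def diff_divide_distrib)
      thus ?thesis using eq2[OF that] c0' by simp
    qed
    obtain w' where w': "\<And>i. i<n \<Longrightarrow> lamJ * w' i - mv n a w' i = 1" and cw: "coronal n E lamJ = (\<Sum>i<n. w' i)"
      using sol[OF gt] by blast
    have "(\<Sum>i<n. w' i) = (\<Sum>i<n. w i)" using uniq[OF lam0 onA gt w' weq] by (intro sum.cong refl) auto
    also have "\<dots> = T / c" by (simp add: w_def T_def vv_def sum_divide_distrib)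
    finally have chi: "coronal n E lamJ = T / c" using cw by simp
    have "lamJ * c = (\<Sum>i<s. lamJ * P i)" by (simp add: c_def sum_distrib_left)
    also have "\<dots> = real s * T" using eq1 by simp
    finally have sT: "lamJ * c = real s * T" .
    have T0: "T \<noteq> 0" using sT lJ0 c0' by auto
    have s0': "0 < s" using assms(2) by simp
    show ?thesis unfolding beta_def chi using sT lJ0 c0' T0 s0' by (simp add: field_simps)
  qed

  have uniqx: "x = lamJ" if x: "lam < x" and bx: "beta x = 1" for x
  proof (rule ccontr)
    assume "x \<noteq> lamJ"
    hence "x < lamJ \<or> lamJ < x" by linarith
    thus False
    proof
      assume "x < lamJ" from mono[OF x this] bx beta1 show False by simp
    next
      assume "lamJ < x" from mono[OF gt this] bx beta1 show False by simp
    qed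
  qed

  obtain w where w: "\<And>i. i<n \<Longrightarrow> lamJ * w i - mv n a w i = 1" and cw: "coronal n E lamJ = (\<Sum>i<n. w i)"
    using sol[OF gt] by blast
  have lJ0: "lamJ > 0" using gt lam0 by simp
  have chiJ: "coronal n E lamJ = lamJ / real s"
    using beta1 s0 lJ0 unfolding beta_def by (simp add: field_simps)
  have quad_sqrt: "lamJ \<le> (lam + sqrt (lam ^ 2 + 4 * real n * real s)) / 2"
    if q: "lamJ * (lamJ - lam) \<le> real s * real n" 
  proof -
    have "(2 * lamJ - lam)^2 \<le> lam ^ 2 + 4 * real n * real s"
      using q by (simp add: power2_eq_square algebra_simps)
    hence "2 * lamJ - lam \<le> sqrt (lam ^ 2 + 4 * real n * real s)" by (rule real_le_rsqrt)
    thus ?thesis by simp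
  qed
  have bound: "lamJ \<le> (lam + sqrt (lam ^ 2 + 4 * real n * real s)) / 2"
  proof (rule quad_sqrt)
    have "lamJ / real s \<le> real n / (lamJ - lam)"
      using chi_props(2)[OF lam0 onA gt w n0] cw chiJ by simp
    thus "lamJ * (lamJ - lam) \<le> real s * real n" using s0 gt by (simp add: field_simps)
  qed

  have reg: "lamJ = (lam + sqrt (lam ^ 2 + 4 * real n * real s)) / 2" if r: "regular_graph n E"
  proof -
    from r obtain k where k: "\<And>i. i<n \<Longrightarrow> card {j. j < n \<and> E i j} = k"
      unfolding regular_graph_def by blast
    have rs: "(\<Sum>j<n. a i j) = real k" if i: "i < n" for i
    proof -
      have "(\<Sum>j<n. a i j) = real (card ({..<n} \<inter> {j. E i j}))" by (simp add: a_def sum.If_cases)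
      also have "{..<n} \<inter> {j. E i j} = {j. j < n \<and> E i j}" by auto
      finally show ?thesis using k[OF i] by simp
    qed
    have k0: "0 \<le> real k" by simp
    have "ip n (mv n a (\<lambda>_. 1)) (mv n a (\<lambda>_. 1)) = real n * real k ^ 2"
      by (simp add: ip_def mv_def rs power2_eq_square)
    moreover have "ip n (\<lambda>_. 1) (\<lambda>_. 1) = real n" by (simp add: ip_def)
    ultimately have "real n * real k ^ 2 \<le> lam^2 * real n" using onA[of "\<lambda>_. 1"] by simp
    hence "real k ^ 2 \<le> lam^2" using n0 by (simp add: mult.commute)
    hence kl: "real k \<le> lam" using lam0 by (rule power2_le_imp_le)
    define Pm where "Pm = Max (p ` {..<n})"
    have fin: "finite (p ` {..<n})" "p ` {..<n} \<noteq> {}" using n0 by auto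
    obtain im where im: "im < n" "p im = Pm" using Max_in[OF fin] unfolding Pm_def by auto
    have ple: "p j \<le> Pm" if "j < n" for j unfolding Pm_def using fin that by (intro Max_ge) auto
    have Pm0: "Pm > 0" using ppos ple by (meson order_less_le_trans)
    have "lam * Pm = mv n a p im" using pev im by simp
    also have "\<dots> = (\<Sum>j<n. a im j * p j)" by (simp add: mv_def)
    also have "\<dots> \<le> (\<Sum>j<n. a im j * Pm)" using ple nna im by (intro sum_mono mult_left_mono) auto
    also have "\<dots> = real k * Pm" by (simp only: sum_distrib_right[symmetric] rs[OF im(1)])
    finally have "lam \<le> real k" using Pm0 by simp
    hence lk: "lam = real k" using kl by simp
    define d where "d = lamJ - lam"
    have d0: "d > 0" using gt by (simp add: d_def)
    define wc where "wc j = 1 / d" for j :: nat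
    have wceq: "lamJ * wc i - mv n a wc i = 1" if "i < n" for i
    proof -
      have "mv n a wc i = real k / d" using rs[OF that] by (simp add: mv_def wc_def sum_divide_distrib[symmetric])
      thus ?thesis using d0 lk by (simp add: wc_def d_def field_simps)
    qed
    have "(\<Sum>i<n. w i) = (\<Sum>i<n. wc i)" using uniq[OF lam0 onA gt w wceq] by (intro sum.cong refl) auto
    hence "lamJ / real s = real n / d" using cw chiJ by (simp add: wc_def)
    hence q: "lamJ * (lamJ - lam) = real s * real n" using s0 d0 by (simp add: d_def field_simps)
    have "(2 * lamJ - lam)^2 = lam ^ 2 + 4 * real n * real s"
      using q by (simp add: power2_eq_square algebra_simps)
    hence "sqrt (lam ^ 2 + 4 * real n * real s) = 2 * lamJ - lam"
      using gt lam0 by (intro real_sqrt_unique) auto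
    thus ?thesis by simp
  qed

  show ?thesis using mono gt beta1 uniqx bound reg by blast
qed


end
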